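(* Let $G$ be a graph and $k\in\mathbb N$. Let $\tau$ be a regular, non-principal $\mathcal P'_k$-tangle of $S_k(G)$, and let $\sigma\subseteq\vec S_k(G)$ be a finite star with finite interior. Then $\sigma\not\subseteq\tau$.
   Context: Graphs may be infinite. A separation of $G$ is a set $\{A,B\}$ with $A,B\subseteq V(G)$, $A\cup B=V(G)$ and no edge of $G$ between $A\setminus B$ and $B\setminus A$; its order is $|A\cap B|$. $S_k(G)$ is the set of separations of order $<k$ and $\vec S_k(G)$ the set of their orientations $(A,B)$, $(B,A)$. Order: $(A,B)\le(C,D)$ iff $A\subseteq C$ and $B\supseteq D$. An orientation of $S_k(G)$ is a set containing exactly one orientation of each element; it is consistent if there are no distinct $\{A,B\},\{C,D\}\in S_k(G)$ with $(A,B)<(C,D)$, $(B,A)\in O$, $(C,D)\in O$; regular if it contains no separation of the form $(V(G),A)$; principal if for every set $X$ of fewer than $k$ vertices it contains $(V(G)\setminus V(K),V(K)\cup X)$ for some component $K$ of $G-X$ (non-principal otherwise). A star is a set $\sigma$ of oriented finite-order separations, not containing $(V(G),V(G))$, with $(A,B)\le(D,C)$ for distinct $(A,B),(C,D)\in\sigma$; its interior is $\mathrm{int}(\sigma)=\bigcap_{(A,B)\in\sigma}B$. $\mathcal P'_k$ is the set of all $\rho=\{(A,B),(B\cap C,A\cup D),(B\cap D,A\cup C)\}\subseteq\vec S_k(G)$ with $(A,B),(C,D)\in\vec S_k(G)$ and $|\mathrm{int}(\rho)|<k$. A $\mathcal P'_k$-tangle of $S_k(G)$ is a consistent orientation of $S_k(G)$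 containing no element of $\mathcal P'_k$ as a subset. *)

theory Defs
  imports Main
begin

definition graph :: "'a set \<Rightarrow> ('a \<Rightarrow> 'a \<Rightarrow> bool) \<Rightarrow> bool" where
  "graph V E \<longleftrightarrow> (\<forall>x y. E x y \<longrightarrow> x \<in> V \<and> y \<in> V \<and> x \<noteq> y \<and> E y x)"

definition is_sep :: "'a set \<Rightarrow> ('a \<Rightarrow> 'a \<Rightarrow> bool) \<Rightarrow> 'a set \<Rightarrow> 'a set \<Rightarrow> bool" where
  "is_sep V E A B \<longleftrightarrow> A \<subseteq> V \<and> B \<subseteq> V \<and> A \<union> B = V \<and>
     (\<forall>x\<in>A - B. \<forall>y\<in>B - A. \<not> E x y)"

definition order_lt :: "nat \<Rightarrow> 'a set \<Rightarrow> 'a set \<Rightarrow> bool" where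
  "order_lt k A B \<longleftrightarrow> finite (A \<inter> B) \<and> card (A \<inter> B) < k"

definition Sk :: "'a set \<Rightarrow> ('a \<Rightarrow> 'a \<Rightarrow> bool) \<Rightarrow> nat \<Rightarrow> 'a set set set" where
  "Sk V E k = {{A, B} | A B. is_sep V E A B \<and> order_lt k A B}"

definition vSk :: "'a set \<Rightarrow> ('a \<Rightarrow> 'a \<Rightarrow> bool) \<Rightarrow> nat \<Rightarrow> ('a set \<times> 'a set) set" where
  "vSk V E k = {(A, B). is_sep V E A B \<and> order_lt k A B}"

definition sep_le :: "('a set \<times> 'a set) \<Rightarrow> ('a set \<times> 'a set) \<Rightarrow> bool" where
  "sep_le p q \<longleftrightarrow> fst p \<subseteq> fst q \<and> snd q \<subseteq> snd p"

definition orientation :: "'a set \<Rightarrow> ('a \<Rightarrow> 'a \<Rightarrow> bool) \<Rightarrow> nat \<Rightarrow> ('a set \<times> 'a set) set \<Rightarrow> bool" where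
  "orientation V E k Or \<longleftrightarrow> Or \<subseteq> vSk V E k \<and>
     (\<forall>s\<in>Sk V E k. \<exists>!p. p \<in> Or \<and> {fst p, snd p} = s)"

definition consistent :: "'a set \<Rightarrow> ('a \<Rightarrow> 'a \<Rightarrow> bool) \<Rightarrow> nat \<Rightarrow> ('a set \<times> 'a set) set \<Rightarrow> bool" where
  "consistent V E k Or \<longleftrightarrow> \<not> (\<exists>A B C D. {A, B} \<in> Sk V E k \<and> {C, D} \<in> Sk V E k \<and>
     {A, B} \<noteq> {C, D} \<and> sep_le (A, B) (C, D) \<and> (A, B) \<noteq> (C, D) \<and>
     (B, A) \<in> Or \<and> (C, D) \<in> Or)"

definition regular :: "'a set \<Rightarrow> ('a set \<times> 'a set) set \<Rightarrow> bool" where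
  "regular V Or \<longleftrightarrow> (\<forall>A. (V, A) \<notin> Or)"

definition components :: "'a set \<Rightarrow> ('a \<Rightarrow> 'a \<Rightarrow> bool) \<Rightarrow> 'a set \<Rightarrow> 'a set set" where
  "components V E X = {{w. (\<lambda>x y. E x y \<and> x \<in> V - X \<and> y \<in> V - X)\<^sup>*\<^sup>* v w} | v. v \<in> V - X}"

definition principal :: "'a set \<Rightarrow> ('a \<Rightarrow> 'a \<Rightarrow> bool) \<Rightarrow> nat \<Rightarrow> ('a set \<times> 'a set) set \<Rightarrow> bool" where
  "principal V E k Or \<longleftrightarrow> (\<forall>X. X \<subseteq> V \<and> finite X \<and> card X < k \<longrightarrow>
     (\<exists>K\<in>components V E X. (V - K, K \<union> X) \<in> Or))"

definition star :: "'a set \<Rightarrow> ('a \<Rightarrow> 'a \<Rightarrow> bool) \<Rightarrow> ('a set \<times> 'a set) set \<Rightarrow> bool" where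
  "star V E \<sigma> \<longleftrightarrow> (\<forall>(A, B)\<in>\<sigma>. is_sep V E A B \<and> finite (A \<inter> B)) \<and> (V, V) \<notin> \<sigma> \<and>
     (\<forall>(A, B)\<in>\<sigma>. \<forall>(C, D)\<in>\<sigma>. (A, B) \<noteq> (C, D) \<longrightarrow> sep_le (A, B) (D, C))"

text \<open>interior: intersection of the second sides, taken inside V (so the empty
family has interior V(G)).\<close>
definition interior_sep :: "'a set \<Rightarrow> ('a set \<times> 'a set) set \<Rightarrow> 'a set" where
  "interior_sep V \<sigma> = V \<inter> \<Inter> (snd ` \<sigma>)"

definition Pk' :: "'a set \<Rightarrow> ('a \<Rightarrow> 'a \<Rightarrow> bool) \<Rightarrow> nat \<Rightarrow> ('a set \<times> 'a set) set set" where
  "Pk' V E k = {\<rho>. \<exists>A B C D. (A, B) \<in> vSk V E k \<and> (C, D) \<in> vSk V E k \<and>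
     \<rho> = {(A, B), (B \<inter> C, A \<union> D), (B \<inter> D, A \<union> C)} \<and> \<rho> \<subseteq> vSk V E k \<and>
     finite (interior_sep V \<rho>) \<and> card (interior_sep V \<rho>) < k}"

definition Pk'_tangle :: "'a set \<Rightarrow> ('a \<Rightarrow> 'a \<Rightarrow> bool) \<Rightarrow> nat \<Rightarrow> ('a set \<times> 'a set) set \<Rightarrow> bool" where
  "Pk'_tangle V E k Or \<longleftrightarrow> orientation V E k Or \<and> consistent V E k Or \<and>
     (\<forall>\<rho>\<in>Pk' V E k. \<not> \<rho> \<subseteq> Or)"

end

theory Submission
  imports Defs
begin
lemma ori:
  assumes "orientation V E k \<tau>" "(P, Q) \<in> vSk V E k"
  shows "(P, Q) \<in> \<tau> \<or> (Q, P) \<in> \<tau>"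
proof -
  have "is_sep V E P Q \<and> order_lt k P Q" using assms(2) unfolding vSk_def by simp
  then have "{P, Q} \<in> Sk V E k" unfolding Sk_def by blast
  then have "\<exists>!p. p \<in> \<tau> \<and> {fst p, snd p} = {P, Q}"
    using assms(1) unfolding orientation_def by simp
  then obtain p where p: "p \<in> \<tau>" "{fst p, snd p} = {P, Q}" by metis
  obtain a b where ab: "p = (a, b)" by (cases p)
  have "(a = P \<and> b = Q) \<or> (a = Q \<and> b = P)" using p(2) ab by (simp add: doubleton_eq_iff)
  then show ?thesis using p(1) ab by blast
qed
lemma sep_meet:
  assumes g: "graph V E" and ab: "is_sep V E A B" and cd: "is_sep V E C D"
  shows "is_sep V E (B \<inter> C) (A \<union> D)"
proof -
  have sym: "\<And>x y. E x y \<Longrightarrow> E y x" using g unfolding graph_def by blast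
  have a: "A \<subseteq> V" "B \<subseteq> V" "A \<union> B = V" "\<And>x y. x \<in> A - B \<Longrightarrow> y \<in> B - A \<Longrightarrow> \<not> E x y"
    using ab unfolding is_sep_def by auto
  have c: "C \<subseteq> V" "D \<subseteq> V" "C \<union> D = V" "\<And>x y. x \<in> C - D \<Longrightarrow> y \<in> D - C \<Longrightarrow> \<not> E x y"
    using cd unfolding is_sep_def by auto
  have "\<not> E x y" if x: "x \<in> B \<inter> C - (A \<union> D)" and y: "y \<in> A \<union> D - B \<inter> C" for x y
  proof
    assume e: "E x y"
    show False
    proof (cases "y \<in> B")
      case True
      then have "y \<in> D - C" using y a c by blast
      then show False using c(4)[of x y] x e by blast
    next
      case False
      then have "y \<in> A - B" using y a c by blast
      then show False using a(4)[of y x] x e sym by blast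
    qed
  qed
  then show ?thesis unfolding is_sep_def using a c by blast
qed
lemma cons_down:
  assumes t: "Pk'_tangle V E k \<tau>" and r: "regular V \<tau>"
    and cd: "(C, D) \<in> \<tau>" and pq: "(P, Q) \<in> vSk V E k" and le: "sep_le (P, Q) (C, D)"
  shows "(P, Q) \<in> \<tau>"
proof -
  have o: "orientation V E k \<tau>" and c: "consistent V E k \<tau>"
    using t unfolding Pk'_tangle_def by auto
  have cdv: "(C, D) \<in> vSk V E k" using o cd unfolding orientation_def by blast
  show ?thesis
  proof (cases "(P, Q) = (C, D)")
    case True then show ?thesis using cd by simp
  next
    case ne: False
    show ?thesis
    proof (cases "{P, Q} = {C, D}")
      case True
      then have "P = D" "Q = C" using ne by (auto simp: doubleton_eq_iff)
      then have "D \<subseteq> C" using le unfolding sep_le_def by auto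
      then have "C = V" using cdv unfolding vSk_def is_sep_def by auto
      then show ?thesis using r cd unfolding regular_def by auto
    next
      case False
      have s1: "{P, Q} \<in> Sk V E k" using pq unfolding Sk_def vSk_def by blast
      have s2: "{C, D} \<in> Sk V E k" using cdv unfolding Sk_def vSk_def by blast
      have "\<not> ((Q, P) \<in> \<tau>)"
      proof
        assume qp: "(Q, P) \<in> \<tau>"
        have "\<exists>A B C D. {A, B} \<in> Sk V E k \<and> {C, D} \<in> Sk V E k \<and>
          {A, B} \<noteq> {C, D} \<and> sep_le (A, B) (C, D) \<and> (A, B) \<noteq> (C, D) \<and>
          (B, A) \<in> \<tau> \<and> (C, D) \<in> \<tau>"
          apply (rule exI[of _ P], rule exI[of _ Q], rule exI[of _ C], rule exI[of _ D])
          using s1 s2 False le ne qp cd by simp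
        then show False using c unfolding consistent_def by blast
      qed
      then show ?thesis using ori[OF o pq] by blast
    qed
  qed
qed
lemma is_sep_sym: "graph V E \<Longrightarrow> is_sep V E A B \<Longrightarrow> is_sep V E B A"
  unfolding is_sep_def graph_def by blast

lemma comb:
  assumes g: "graph V E" and t: "Pk'_tangle V E k \<tau>" and r: "regular V \<tau>"
    and ab: "(A, B) \<in> \<tau>" and cd: "(C, D) \<in> \<tau>"
    and fI: "finite ((A \<inter> B) \<union> (B \<inter> C \<inter> D))" and cI: "card ((A \<inter> B) \<union> (B \<inter> C \<inter> D)) < k"
  shows "(A \<union> C, B \<inter> D) \<in> \<tau>"
proof -
  define I where "I = (A \<inter> B) \<union> (B \<inter> C \<inter> D)"
  have o: "orientation V E k \<tau>" using t unfolding Pk'_tangle_def by auto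
  have abv: "(A, B) \<in> vSk V E k" and cdv: "(C, D) \<in> vSk V E k"
    using o ab cd unfolding orientation_def by blast+
  have sAB: "is_sep V E A B" and sCD: "is_sep V E C D" using abv cdv unfolding vSk_def by auto
  have s1: "is_sep V E (B \<inter> C) (A \<union> D)" using sep_meet[OF g sAB sCD] .
  have s2: "is_sep V E (B \<inter> D) (A \<union> C)" using sep_meet[OF g sAB is_sep_sym[OF g sCD]] .
  have small: "finite S \<and> card S < k" if "S \<subseteq> I" for S
    using that fI cI unfolding I_def by (meson card_mono finite_subset le_less_trans)
  have "(B \<inter> C) \<inter> (A \<union> D) \<subseteq> I" unfolding I_def by blast
  then have v1: "(B \<inter> C, A \<union> D) \<in> vSk V E k"
    using s1 small unfolding vSk_def order_lt_def by simp
  have "(B \<inter> D) \<inter> (A \<union> C) \<subseteq> I" unfolding I_def by blast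
  then have v2: "(B \<inter> D, A \<union> C) \<in> vSk V E k"
    using s2 small unfolding vSk_def order_lt_def by simp
  have in1: "(B \<inter> C, A \<union> D) \<in> \<tau>"
    using cons_down[OF t r cd v1] unfolding sep_le_def by auto
  have BV: "B \<subseteq> V" using sAB unfolding is_sep_def by auto
  have "interior_sep V {(A, B), (B \<inter> C, A \<union> D), (B \<inter> D, A \<union> C)} \<subseteq> I"
    unfolding interior_sep_def I_def by auto
  then have sm: "finite (interior_sep V {(A, B), (B \<inter> C, A \<union> D), (B \<inter> D, A \<union> C)}) \<and>
      card (interior_sep V {(A, B), (B \<inter> C, A \<union> D), (B \<inter> D, A \<union> C)}) < k"
    using small by blast
  have sub: "{(A, B), (B \<inter> C, A \<union> D), (B \<inter> D, A \<union> C)} \<subseteq> vSk V E k" using abv v1 v2 by simp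
  have "{(A, B), (B \<inter> C, A \<union> D), (B \<inter> D, A \<union> C)} \<in> Pk' V E k"
    unfolding Pk'_def mem_Collect_eq
    apply (rule exI[of _ A], rule exI[of _ B], rule exI[of _ C], rule exI[of _ D])
    using sm sub abv cdv by simp
  then have "\<not> {(A, B), (B \<inter> C, A \<union> D), (B \<inter> D, A \<union> C)} \<subseteq> \<tau>"
    using t unfolding Pk'_tangle_def by blast
  then have "(B \<inter> D, A \<union> C) \<notin> \<tau>" using ab in1 by blast
  then show ?thesis using ori[OF o v2] by blast
qed
lemma comp_sep:
  assumes g: "graph V E" and XV: "X \<subseteq> V" and y: "y \<in> V - X"
    and K: "K = {w. (\<lambda>x y. E x y \<and> x \<in> V - X \<and> y \<in> V - X)\<^sup>*\<^sup>* y w}"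
  shows "is_sep V E (V - K) (K \<union> X) \<and> (V - K) \<inter> (K \<union> X) = X \<and> y \<in> K \<and> K \<in> components V E X"
proof -
  define R where "R = (\<lambda>x y. E x y \<and> x \<in> V - X \<and> y \<in> V - X)"
  have sym: "\<And>x y. E x y \<Longrightarrow> E y x" using g unfolding graph_def by blast
  have KV: "K \<subseteq> V - X"
  proof
    fix w assume "w \<in> K"
    then have "R\<^sup>*\<^sup>* y w" using K R_def by simp
    then show "w \<in> V - X" using y by (induct rule: rtranclp_induct) (auto simp: R_def)
  qed
  have yK: "y \<in> K" using K by simp
  have noE: "\<not> E x w" if x: "x \<in> V - K - X" and w: "w \<in> K" for x w
  proof
    assume e: "E x w"
    have "R\<^sup>*\<^sup>* y w" using w K R_def by simp
    moreover have "R w x" using e sym x KV w unfolding R_def by blast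
    ultimately have "R\<^sup>*\<^sup>* y x" by simp
    then have "x \<in> K" using K R_def by simp
    then show False using x by blast
  qed
  have "is_sep V E (V - K) (K \<union> X)"
    unfolding is_sep_def using KV XV noE by blast
  moreover have "(V - K) \<inter> (K \<union> X) = X" using KV XV by blast
  moreover have "K \<in> components V E X" unfolding components_def using K y by blast
  ultimately show ?thesis using yK by blast
qed

theorem lemma2p4:
  fixes V :: "'a set" and E :: "'a \<Rightarrow> 'a \<Rightarrow> bool" and k :: nat
    and \<tau> \<sigma> :: "('a set \<times> 'a set) set"
  assumes "graph V E"
    and "Pk'_tangle V E k \<tau>" and "regular V \<tau>" and "\<not> principal V E k \<tau>"
    and "\<sigma> \<subseteq> vSk V E k" and "star V E \<sigma>" and "finite \<sigma>"
    and "finite (interior_sep V \<sigma>)"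
  shows "\<not> \<sigma> \<subseteq> \<tau>"
proof
  assume st: "\<sigma> \<subseteq> \<tau>"
  note g = assms(1) and t = assms(2) and r = assms(3)
  have o: "orientation V E k \<tau>" using t unfolding Pk'_tangle_def by auto
  have tv: "\<tau> \<subseteq> vSk V E k" using o unfolding orientation_def by auto
  obtain X where XV: "X \<subseteq> V" and fX: "finite X" and cX: "card X < k"
    and np: "\<forall>K\<in>components V E X. (V - K, K \<union> X) \<notin> \<tau>"
    using assms(4) unfolding principal_def by blast
  have small: "finite S \<and> card S < k" if "S \<subseteq> X" for S
    using that fX cX by (meson card_mono finite_subset le_less_trans)
  define Z where "Z = interior_sep V \<sigma>"
  have ZV: "Z \<subseteq> V" unfolding Z_def interior_sep_def by auto
  have step1: "Y \<subseteq> V \<Longrightarrow> \<exists>U W. (U, W) \<in> \<tau> \<and> U \<inter> W \<subseteq> X \<and> X \<subseteq> U \<and> Y \<subseteq> U"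
    if fY: "finite Y" for Y
    using fY
  proof (induct rule: finite_induct)
    case empty
    have "(X, V) \<in> vSk V E k" unfolding vSk_def is_sep_def order_lt_def
      using XV small[of X] by (auto simp: Int_absorb2)
    then have "(X, V) \<in> \<tau>" using ori[OF o] r unfolding regular_def by blast
    then show ?case by blast
  next
    case (insert y Y)
    then obtain U W where UW: "(U, W) \<in> \<tau>" "U \<inter> W \<subseteq> X" "X \<subseteq> U" "Y \<subseteq> U" by auto
    show ?case
    proof (cases "y \<in> U")
      case True then show ?thesis using UW by blast
    next
      case False
      have yVX: "y \<in> V - X" using False insert UW by auto
      define K where "K = {w. (\<lambda>x y. E x y \<and> x \<in> V - X \<and> y \<in> V - X)\<^sup>*\<^sup>* y w}"
      have cs: "is_sep V E (V - K) (K \<union> X)" "(V - K) \<inter> (K \<union> X) = X" "y \<in> K" "K \<in> components V E X"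
        using comp_sep[OF g XV yVX K_def] by auto
      have "(V - K, K \<union> X) \<in> vSk V E k" unfolding vSk_def order_lt_def using cs small[of X] by auto
      then have kin: "(K \<union> X, V - K) \<in> \<tau>" using ori[OF o] np cs(4) by blast
      have I: "(U \<inter> W) \<union> (W \<inter> (K \<union> X) \<inter> (V - K)) \<subseteq> X" using UW cs(2) by blast
      have "(U \<union> (K \<union> X), W \<inter> (V - K)) \<in> \<tau>"
        using comb[OF g t r UW(1) kin] small[OF I] by blast
      moreover have "(U \<union> (K \<union> X)) \<inter> (W \<inter> (V - K)) \<subseteq> X" using UW cs(2) by blast
      ultimately show ?thesis using UW cs(3) by blast
    qed
  qed
  obtain U0 W0 where UW0: "(U0, W0) \<in> \<tau>" "U0 \<inter> W0 \<subseteq> X" "Z \<subseteq> U0"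
    using step1[OF _ ZV] assms(8) Z_def by blast
  have AB_Z: "A \<inter> B \<subseteq> Z" if ab: "(A, B) \<in> \<sigma>" for A B
  proof
    fix v assume v: "v \<in> A \<inter> B"
    have "v \<in> V" using ab assms(5) v unfolding vSk_def is_sep_def by blast
    moreover have "v \<in> snd q" if q: "q \<in> \<sigma>" for q
    proof (cases "q = (A, B)")
      case True then show ?thesis using v by simp
    next
      case False
      obtain A' B' where q': "q = (A', B')" by (cases q)
      have "sep_le (A, B) (B', A')" using assms(6) ab q q' False unfolding star_def by blast
      then show ?thesis using v q' unfolding sep_le_def by auto
    qed
    ultimately show "v \<in> Z" unfolding Z_def interior_sep_def by blast
  qed
  have step2: "\<sigma>' \<subseteq> \<sigma> \<Longrightarrow> \<exists>U W. (U, W) \<in> \<tau> \<and> U \<inter> W \<subseteq> X \<and> Z \<subseteq> U \<and> (\<forall>p\<in>\<sigma>'. fst p \<subseteq> U)"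
    if f: "finite \<sigma>'" for \<sigma>'
    using f
  proof (induct rule: finite_induct)
    case empty then show ?case using UW0 by blast
  next
    case (insert p \<sigma>')
    then obtain U W where UW: "(U, W) \<in> \<tau>" "U \<inter> W \<subseteq> X" "Z \<subseteq> U" "\<forall>p\<in>\<sigma>'. fst p \<subseteq> U" by auto
    obtain A B where p: "p = (A, B)" by (cases p)
    have abs: "(A, B) \<in> \<sigma>" using insert p by auto
    then have abt: "(A, B) \<in> \<tau>" using st by auto
    have I: "(U \<inter> W) \<union> (W \<inter> A \<inter> B) \<subseteq> X" using UW AB_Z[OF abs] by blast
    have "(U \<union> A, W \<inter> B) \<in> \<tau>" using comb[OF g t r UW(1) abt] small[OF I] by blast
    moreover have "(U \<union> A) \<inter> (W \<inter> B) \<subseteq> X" using UW AB_Z[OF abs] by blast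
    ultimately show ?case using UW p
      by (intro exI[of _ "U \<union> A"] exI[of _ "W \<inter> B"]) auto
  qed
  obtain U W where UW: "(U, W) \<in> \<tau>" "Z \<subseteq> U" "\<forall>p\<in>\<sigma>. fst p \<subseteq> U"
    using step2[OF assms(7)] by blast
  have "V \<subseteq> U"
  proof
    fix v assume v: "v \<in> V"
    show "v \<in> U"
    proof (cases "v \<in> Z")
      case True then show ?thesis using UW by blast
    next
      case False
      then obtain A B where ab: "(A, B) \<in> \<sigma>" "v \<notin> B" using v unfolding Z_def interior_sep_def by force
      then have "v \<in> A" using v assms(5) unfolding vSk_def is_sep_def by blast
      then show ?thesis using UW ab by force
    qed
  qed
  moreover have "U \<subseteq> V" using UW tv unfolding vSk_def is_sep_def by blast
  ultimately have "(V, W) \<in> \<tau>" using UW by auto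
  then show False using r unfolding regular_def by blast
qed

end
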